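(* Let $(X,d,\mu)$ be an almost-manifold metric measure space. Then every bounded closed subset of $X$ is compact.
   Context: A metric measure space $(X,d,\mu)$: $(X,d)$ is a complete metric space and $\mu$ is a Borel regular measure with $\mu(B_r(x))<\infty$ for all $x\in X$, $r>0$. It is almost-manifold if there is an integer $m\ge3$ such that (i) (local Ahlfors $m$-regularity) for every bounded $U\subset X$ there are $\varepsilon,C>0$ with $C^{-1}r^m\le\mu(B_r(x))\le Cr^m$ for $x\in U$, $r\in(0,\varepsilon)$; (ii) $X=\mathcal R\sqcup\mathcal S$ where $\mathcal R$ is a connected smooth $m$-manifold with a Riemannian metric $g$ such that $d_L=d_g$ and $\mu=\mu_g$ on $\mathcal R$ ($d_L$ the length metric associated to $d$), and $\mathcal S$ is closed with $\mathcal H^{m-2}(\mathcal S)=0$. *)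

theory Defs
  imports "HOL-Analysis.Analysis"
begin

definition smooth_on :: "'n::euclidean_space set \<Rightarrow> ('n \<Rightarrow> 'b::real_normed_vector) \<Rightarrow> bool" where
  "smooth_on S f \<longleftrightarrow> (\<exists>F. f \<in> F \<and> (\<forall>g\<in>F. (\<forall>x\<in>S. g differentiable (at x)) \<and>
       (\<forall>i\<in>Basis. (\<lambda>x. frechet_derivative g (at x) i) \<in> F)))"

definition curve_length :: "(real \<Rightarrow> 'a::metric_space) \<Rightarrow> ennreal" where
  "curve_length \<gamma> = (SUP ts \<in> {ts. sorted ts \<and> set ts \<subseteq> {0..1}}.
      ennreal (\<Sum>i<length ts - 1. dist (\<gamma> (ts ! i)) (\<gamma> (ts ! Suc i))))"

definition length_dist :: "'a::metric_space \<Rightarrow> 'a \<Rightarrow> ennreal" where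
  "length_dist x y = (INF \<gamma> \<in> {\<gamma>. path \<gamma> \<and> pathstart \<gamma> = x \<and> pathfinish \<gamma> = y}. curve_length \<gamma>)"

definition smooth_atlas :: "'a::metric_space set \<Rightarrow> (('a \<Rightarrow> real^'n) \<times> 'a set) set \<Rightarrow> bool" where
  "smooth_atlas R A \<longleftrightarrow>
     (\<forall>(\<phi>,U)\<in>A. open U \<and> U \<subseteq> R \<and> inj_on \<phi> U \<and> continuous_on U \<phi> \<and> open (\<phi> ` U) \<and>
                 continuous_on (\<phi> ` U) (inv_into U \<phi>)) \<and>
     R = \<Union>(snd ` A) \<and>
     (\<forall>(\<phi>1,U1)\<in>A. \<forall>(\<phi>2,U2)\<in>A. smooth_on (\<phi>1 ` (U1 \<inter> U2)) (\<phi>2 \<circ> inv_into U1 \<phi>1))"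

text \<open>Riemannian metric given by its coordinate expressions G phi in each chart.\<close>
definition riemannian_metric :: "(('a \<Rightarrow> real^'n) \<times> 'a set) set \<Rightarrow> (('a \<Rightarrow> real^'n) \<Rightarrow> real^'n \<Rightarrow> real^'n^'n) \<Rightarrow> bool" where
  "riemannian_metric A G \<longleftrightarrow>
     (\<forall>(\<phi>,U)\<in>A. smooth_on (\<phi> ` U) (G \<phi>) \<and>
        (\<forall>p\<in>\<phi> ` U. transpose (G \<phi> p) = G \<phi> p \<and> (\<forall>v. v \<noteq> 0 \<longrightarrow> v \<bullet> (G \<phi> p *v v) > 0))) \<and>
     (\<forall>(\<phi>1,U1)\<in>A. \<forall>(\<phi>2,U2)\<in>A. \<forall>p\<in>\<phi>1 ` (U1 \<inter> U2).
        G \<phi>1 p = transpose (matrix (frechet_derivative (\<phi>2 \<circ> inv_into U1 \<phi>1) (at p)))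
                  ** G \<phi>2 ((\<phi>2 \<circ> inv_into U1 \<phi>1) p)
                  ** matrix (frechet_derivative (\<phi>2 \<circ> inv_into U1 \<phi>1) (at p)))"

definition chart_at :: "(('a \<Rightarrow> real^'n) \<times> 'a set) set \<Rightarrow> 'a \<Rightarrow> ('a \<Rightarrow> real^'n) \<times> 'a set" where
  "chart_at A x = (SOME c. c \<in> A \<and> x \<in> snd c)"

definition admissible_curve :: "'a::metric_space set \<Rightarrow> (('a \<Rightarrow> real^'n) \<times> 'a set) set \<Rightarrow> (real \<Rightarrow> 'a) \<Rightarrow> bool" where
  "admissible_curve R A \<gamma> \<longleftrightarrow> path \<gamma> \<and> path_image \<gamma> \<subseteq> R \<and>
     (\<forall>(\<phi>,U)\<in>A. \<forall>a b. 0 \<le> a \<and> a \<le> b \<and> b \<le> 1 \<and> \<gamma> ` {a..b} \<subseteq> U \<longrightarrow>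
         (\<phi> \<circ> \<gamma>) piecewise_C1_differentiable_on {a..b})"

definition riem_length :: "(('a \<Rightarrow> real^'n) \<times> 'a set) set \<Rightarrow> (('a \<Rightarrow> real^'n) \<Rightarrow> real^'n \<Rightarrow> real^'n^'n) \<Rightarrow> (real \<Rightarrow> 'a) \<Rightarrow> ennreal" where
  "riem_length A G \<gamma> = (\<integral>\<^sup>+ t \<in> {0..1}.
     (let \<phi> = fst (chart_at A (\<gamma> t)); v = vector_derivative (\<phi> \<circ> \<gamma>) (at t)
      in ennreal (sqrt (v \<bullet> (G \<phi> (\<phi> (\<gamma> t)) *v v)))) \<partial>lborel)"

definition riem_dist :: "'a::metric_space set \<Rightarrow> (('a \<Rightarrow> real^'n) \<times> 'a set) set \<Rightarrow> (('a \<Rightarrow> real^'n) \<Rightarrow> real^'n \<Rightarrow> real^'n^'n) \<Rightarrow> 'a \<Rightarrow> 'a \<Rightarrow> ennreal" where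
  "riem_dist R A G x y = (INF \<gamma> \<in> {\<gamma>. admissible_curve R A \<gamma> \<and> pathstart \<gamma> = x \<and> pathfinish \<gamma> = y}.
      riem_length A G \<gamma>)"

definition riem_volume_agrees :: "'a::metric_space measure \<Rightarrow> (('a \<Rightarrow> real^'n) \<times> 'a set) set \<Rightarrow> (('a \<Rightarrow> real^'n) \<Rightarrow> real^'n \<Rightarrow> real^'n^'n) \<Rightarrow> bool" where
  "riem_volume_agrees \<mu> A G \<longleftrightarrow>
     (\<forall>(\<phi>,U)\<in>A. \<forall>B\<in>sets borel. B \<subseteq> U \<longrightarrow>
        emeasure \<mu> B = (\<integral>\<^sup>+ p \<in> \<phi> ` B. ennreal (sqrt (det (G \<phi> p))) \<partial>lborel))"

section \<open>Hausdorff measure (unnormalised; normalisation is irrelevant for null sets)\<close>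

definition hausdorff_pre :: "real \<Rightarrow> real \<Rightarrow> 'a::metric_space set \<Rightarrow> ennreal" where
  "hausdorff_pre s \<delta> E = (INF C \<in> {C :: nat \<Rightarrow> 'a set. E \<subseteq> (\<Union>i. C i) \<and>
        (\<forall>i. bounded (C i) \<and> diameter (C i) \<le> \<delta>)}. (\<Sum>i. ennreal (diameter (C i) powr s)))"

definition hausdorff_measure :: "real \<Rightarrow> 'a::metric_space set \<Rightarrow> ennreal" where
  "hausdorff_measure s E = (SUP \<delta> \<in> {0<..}. hausdorff_pre s \<delta> E)"

text \<open>X is the whole (complete metric) type 'a; the dimension m is CARD('n).\<close>
definition almost_manifold :: "'n::finite itself \<Rightarrow> 'a::complete_space measure \<Rightarrow> bool" where
  "almost_manifold _ \<mu> \<longleftrightarrow>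
     sets \<mu> = sets borel \<and>
     (\<forall>x r. emeasure \<mu> (ball x r) < \<infinity>) \<and>
     CARD('n) \<ge> 3 \<and>
     (\<forall>U. bounded U \<longrightarrow> (\<exists>\<epsilon>>0. \<exists>C>0. \<forall>x\<in>U. \<forall>r. 0 < r \<and> r < \<epsilon> \<longrightarrow>
         ennreal (r ^ CARD('n) / C) \<le> emeasure \<mu> (ball x r) \<and>
         emeasure \<mu> (ball x r) \<le> ennreal (C * r ^ CARD('n)))) \<and>
     (\<exists>R (A :: (('a \<Rightarrow> real^'n) \<times> 'a set) set) G.
         connected R \<and> smooth_atlas R A \<and> riemannian_metric A G \<and>
         (\<forall>x\<in>R. \<forall>y\<in>R. length_dist x y = riem_dist R A G x y) \<and>
         riem_volume_agrees \<mu> A G \<and>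
         closed (UNIV - R) \<and>
         hausdorff_measure (real CARD('n) - 2) (UNIV - R) = 0)"

end

theory Submission
  imports Defs
begin

lemma sep_bound:
  fixes \<mu> :: "'a::metric_space measure"
  assumes sets: "sets \<mu> = sets borel"
    and fin: "emeasure \<mu> (ball x0 (B + r)) < \<infinity>"
    and K: "K \<subseteq> ball x0 B" and r: "r > 0"
    and low: "\<forall>x\<in>K. ennreal c \<le> emeasure \<mu> (ball x r)"
    and S: "finite S" "S \<subseteq> K"
    and sep: "\<forall>x\<in>S. \<forall>y\<in>S. x \<noteq> y \<longrightarrow> 2 * r \<le> dist x y"
    and c: "c \<ge> 0"
  shows "real (card S) * c \<le> measure \<mu> (ball x0 (B + r))"
proof -
  have disj: "disjoint_family_on (\<lambda>x. ball x r) S"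
    unfolding disjoint_family_on_def
  proof (intro ballI impI)
    fix x y assume "x \<in> S" "y \<in> S" "x \<noteq> y"
    then have d: "2 * r \<le> dist x y" using sep by auto
    show "ball x r \<inter> ball y r = {}"
    proof (rule ccontr)
      assume "ball x r \<inter> ball y r \<noteq> {}"
      then obtain z where "dist x z < r" "dist y z < r" by auto
      then have "dist x y < 2 * r" using dist_triangle3[of x y z] by (simp add: dist_commute)
      then show False using d by simp
    qed
  qed
  have meas: "(\<lambda>x. ball x r) ` S \<subseteq> sets \<mu>" unfolding sets by auto
  have "(\<Sum>x\<in>S. ennreal c) \<le> (\<Sum>x\<in>S. emeasure \<mu> (ball x r))"
    by (rule sum_mono) (use low S in auto)
  also have "\<dots> = emeasure \<mu> (\<Union>x\<in>S. ball x r)"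
    by (rule sum_emeasure[OF meas disj S(1)])
  also have "\<dots> \<le> emeasure \<mu> (ball x0 (B + r))"
  proof (rule emeasure_mono)
    show "(\<Union>x\<in>S. ball x r) \<subseteq> ball x0 (B + r)"
    proof
      fix z assume "z \<in> (\<Union>x\<in>S. ball x r)"
      then obtain x where "x \<in> S" "dist x z < r" by auto
      moreover have "dist x0 x < B" using K S \<open>x \<in> S\<close> by auto
      ultimately show "z \<in> ball x0 (B + r)" using dist_triangle[of x0 z x] by auto
    qed
    show "ball x0 (B + r) \<in> sets \<mu>" unfolding sets by auto
  qed
  also have "\<dots> = ennreal (measure \<mu> (ball x0 (B + r)))"
    using fin by (simp add: emeasure_eq_ennreal_measure)
  finally have h: "(\<Sum>x\<in>S. ennreal c) \<le> ennreal (measure \<mu> (ball x0 (B + r)))" .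
  have "(\<Sum>x\<in>S. ennreal c) = ennreal (\<Sum>x\<in>S. c)"
    by (rule sum_ennreal) (use c in simp)
  also have "(\<Sum>x\<in>S. c) = real (card S) * c" by simp
  finally have "ennreal (real (card S) * c) \<le> ennreal (measure \<mu> (ball x0 (B + r)))"
    using h by simp
  then show ?thesis using c by (simp add: ennreal_le_iff2) (smt (verit) ennreal_le_iff measure_nonneg)
qed

theorem lemma2p3:
  fixes \<mu> :: "'a::complete_space measure"
  assumes "almost_manifold TYPE('n::finite) \<mu>"
  shows "\<forall>K :: 'a set. bounded K \<and> closed K \<longrightarrow> compact K"
proof (intro allI impI)
  fix K :: "'a set" assume KK: "bounded K \<and> closed K"
  have sets: "sets \<mu> = sets borel" and fin: "\<And>x r. emeasure \<mu> (ball x r) < \<infinity>"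
    and ahl: "\<And>U. bounded U \<Longrightarrow> (\<exists>\<epsilon>>0. \<exists>C>0. \<forall>x\<in>U. \<forall>r. 0 < r \<and> r < \<epsilon> \<longrightarrow>
         ennreal (r ^ CARD('n) / C) \<le> emeasure \<mu> (ball x r) \<and>
         emeasure \<mu> (ball x r) \<le> ennreal (C * r ^ CARD('n)))"
    using assms unfolding almost_manifold_def by auto
  obtain \<epsilon> C where eC: "\<epsilon> > 0" "C > 0" and
    low: "\<And>x r. x \<in> K \<Longrightarrow> 0 < r \<Longrightarrow> r < \<epsilon> \<Longrightarrow> ennreal (r ^ CARD('n) / C) \<le> emeasure \<mu> (ball x r)"
    using ahl[of K] KK by blast
  obtain x0 :: 'a and B where B: "K \<subseteq> ball x0 B"
    using KK bounded_subset_ballD by blast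
  have tb: "\<exists>k. finite k \<and> K \<subseteq> (\<Union>x\<in>k. ball x e)" if e: "e > 0" for e
  proof -
    define d where "d = min e \<epsilon>"
    define r where "r = d / 2"
    have d: "d > 0" "d \<le> e" using e eC by (auto simp: d_def)
    have r: "r > 0" "r < \<epsilon>" using d eC by (auto simp: r_def d_def)
    define c where "c = r ^ CARD('n) / C"
    have c: "c > 0" using r eC by (simp add: c_def)
    define P where "P S \<longleftrightarrow> finite S \<and> S \<subseteq> K \<and> (\<forall>x\<in>S. \<forall>y\<in>S. x \<noteq> y \<longrightarrow> d \<le> dist x y)" for S
    define M where "M = measure \<mu> (ball x0 (B + r))"
    have bnd: "card S \<le> nat \<lceil>M / c\<rceil>" if "P S" for S
    proof -
      have "real (card S) * c \<le> M"
        unfolding M_def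
        apply (rule sep_bound[OF sets fin B r(1)])
        using that low r c unfolding P_def c_def r_def by auto
      then have "real (card S) \<le> M / c" using c by (simp add: field_simps)
      then show ?thesis by linarith
    qed
    define N where "N = Max (card ` {S. P S})"
    have P0: "P {}" by (simp add: P_def)
    have finc: "finite (card ` {S. P S})"
      by (rule finite_subset[of _ "{..nat \<lceil>M / c\<rceil>}"]) (use bnd in auto)
    have "N \<in> card ` {S. P S}" unfolding N_def
      using finc P0 by (intro Max_in) auto
    then obtain S where S: "P S" "card S = N" by auto
    have Nmax: "card T \<le> N" if "P T" for T
      unfolding N_def using finc that by auto
    have cover: "K \<subseteq> (\<Union>x\<in>S. ball x e)"
    proof
      fix y assume y: "y \<in> K"
      show "y \<in> (\<Union>x\<in>S. ball x e)"
      proof (rule ccontr)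
        assume "y \<notin> (\<Union>x\<in>S. ball x e)"
        then have far: "\<forall>x\<in>S. e \<le> dist x y" by (auto simp: not_less)
        then have yS: "y \<notin> S" using e by force
        have "P (insert y S)"
          using S(1) y far d(2) unfolding P_def
          by (auto simp: dist_commute intro: order_trans)
        then have "card (insert y S) \<le> N" by (rule Nmax)
        moreover have "card (insert y S) = N + 1"
          using S yS unfolding P_def by simp
        ultimately show False by simp
      qed
    qed
    moreover have "finite S" using S(1) unfolding P_def by simp
    ultimately show ?thesis by blast
  qed
  have "complete K" using KK complete_eq_closed by blast
  then show "compact K"
    unfolding compact_eq_totally_bounded
    using tb by blast
qed

end
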